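(* For the Thue-Morse word $t$, \[\limsup_{n\to\infty}\frac{PPL_t(n)}{\ln n}=\frac{3}{4\ln 2},\qquad \liminf_{n\to\infty}\frac{PPL_t(n)}{\ln n}=0.\]
   Context: The Thue-Morse word $t=t[1]t[2]\cdots=abbabaabbaababba\cdots$ is the fixed point starting with $a$ of the morphism $a\mapsto abba,\ b\mapsto baab$. A palindrome is a word $p=p[1]\cdots p[n]$ with $p[i]=p[n-i+1]$ for all $i$. $PPL_t(n)$ is the minimal number of nonempty palindromes whose concatenation equals the prefix of $t$ of length $n$. *)

theory Defs
  imports Complex_Main "HOL-Library.Liminf_Limsup" "HOL-Library.Extended_Real"
begin

datatype letter = A | B

fun tm_morph :: "letter \<Rightarrow> letter list" where
  "tm_morph A = [A, B, B, A]"
| "tm_morph B = [B, A, A, B]"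

definition tm_iter :: "nat \<Rightarrow> letter list" where
  "tm_iter k = ((\<lambda>w. concat (map tm_morph w)) ^^ k) [A]"

text \<open>The Thue-Morse word t = t[1] t[2] ..., the fixed point starting with a
  (1-indexed; tm_iter n has length 4^n \<ge> n, and each tm_iter k is a prefix of tm_iter (k+1)).\<close>
definition thue_morse :: "nat \<Rightarrow> letter" where
  "thue_morse i = tm_iter i ! (i - 1)"

definition tm_prefix :: "nat \<Rightarrow> letter list" where
  "tm_prefix n = map thue_morse [1..<n+1]"

definition palindrome :: "'a list \<Rightarrow> bool" where
  "palindrome p \<longleftrightarrow> rev p = p"

definition PPL_t :: "nat \<Rightarrow> nat" where
  "PPL_t n = (LEAST k. \<exists>ps. length ps = k \<and> (\<forall>p\<in>set ps. p \<noteq> [] \<and> palindrome p)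
                          \<and> concat ps = tm_prefix n)"

end

theory Submission
  imports Defs "HOL-Real_Asymp.Real_Asymp"
begin

fun fl :: "letter \<Rightarrow> letter" where "fl A = B" | "fl B = A"
lemma fl_neq[simp]: "fl x \<noteq> x" "x \<noteq> fl x" by (cases x; simp)+
lemma fl_fl[simp]: "fl (fl x) = x" "(fl x = fl y) = (x = y)" by (cases x; cases y; simp)+

function tw :: "nat \<Rightarrow> letter" where
  "tw n = (if n = 0 then A else tm_morph (tw (n div 4)) ! (n mod 4))"
  by auto
termination by (relation "measure id") auto
declare tw.simps[simp del]

lemma tw4: assumes "r < 4" shows "tw (4*m+r) = tm_morph (tw m) ! r"
proof (cases "4*m+r = 0")
  case True
  then have "m = 0" "r = 0" by auto
  then show ?thesis by (simp add: tw.simps)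
next
  case False
  then show ?thesis using assms by (subst tw.simps) auto
qed

lemma tw0: "n = 4*m \<Longrightarrow> tw n = tw m" using tw4[of 0 m] by (cases "tw m") auto
lemma tw1: "n = 4*m+1 \<Longrightarrow> tw n = fl (tw m)" using tw4[of 1 m] by (cases "tw m") auto
lemma tw2: "n = 4*m+2 \<Longrightarrow> tw n = fl (tw m)" using tw4[of 2 m] by (cases "tw m") auto
lemma tw3: "n = 4*m+3 \<Longrightarrow> tw n = tw m" using tw4[of 3 m] by (cases "tw m") auto

lemma len_morph[simp]: "length (tm_morph x) = 4" by (cases x) auto

lemma len_concat_morph: "length (concat (map tm_morph xs)) = 4 * length xs"
  by (induction xs) auto

lemma nth_concat_morph: "i < length xs \<Longrightarrow> r < 4 \<Longrightarrow>
   concat (map tm_morph xs) ! (4*i+r) = tm_morph (xs ! i) ! r"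
proof (induction xs arbitrary: i)
  case Nil then show ?case by simp
next
  case (Cons x xs)
  show ?case
  proof (cases i)
    case 0 then show ?thesis using Cons by (simp add: nth_append)
  next
    case (Suc i')
    have "concat (map tm_morph (x # xs)) ! (4*i+r) = concat (map tm_morph xs) ! (4*i'+r)"
      using Suc by (simp add: nth_append)
    then show ?thesis using Cons Suc by simp
  qed
qed

lemma tm_iter_Suc: "tm_iter (Suc k) = concat (map tm_morph (tm_iter k))"
  by (simp add: tm_iter_def)

lemma len_tm_iter: "length (tm_iter k) = 4^k"
  by (induction k) (auto simp: tm_iter_Suc len_concat_morph, simp add: tm_iter_def)

lemma tm_iter_nth: "i < 4^k \<Longrightarrow> tm_iter k ! i = tw i"
proof (induction k arbitrary: i)
  case 0 then show ?case by (simp add: tm_iter_def tw.simps)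
next
  case (Suc k)
  have i: "i = 4*(i div 4) + i mod 4" by simp
  have lt: "i div 4 < 4^k" using Suc.prems by simp
  have "tm_iter (Suc k) ! i = tm_morph (tm_iter k ! (i div 4)) ! (i mod 4)"
    unfolding tm_iter_Suc using nth_concat_morph[of "i div 4" "tm_iter k" "i mod 4"] lt
    by (simp add: len_tm_iter)
  also have "\<dots> = tm_morph (tw (i div 4)) ! (i mod 4)" using Suc.IH lt by simp
  also have "\<dots> = tw i" using tw4[of "i mod 4" "i div 4"] i by simp
  finally show ?case .
qed

lemma lt4pow: "i < 4^Suc i"
proof (induction i)
  case 0 then show ?case by simp
next
  case (Suc i) then show ?case by simp
qed

lemma thue_morse_tw: "thue_morse (Suc i) = tw i"
  unfolding thue_morse_def using tm_iter_nth[OF lt4pow[of i]] by simp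

lemma tm_prefix_tw: "tm_prefix n = map tw [0..<n]"
proof -
  have "tm_prefix n = map thue_morse (map Suc [0..<n])"
    unfolding tm_prefix_def by (simp add: map_Suc_upt)
  also have "\<dots> = map tw [0..<n]" by (simp add: thue_morse_tw)
  finally show ?thesis .
qed

function pg :: "nat \<Rightarrow> nat" where
  "pg n = (if n = 0 then 0 else if n mod 4 = 0 then pg (n div 4)
     else if n mod 4 = 1 then pg (n div 4) + 1
     else if n mod 4 = 2 then min (pg (n div 4)) (pg (n div 4 + 1)) + 2
     else pg (n div 4 + 1) + 1)"
  by auto
termination by (relation "measure id") auto
declare pg.simps[simp del]

lemma pg_zero[simp]: "pg 0 = 0" by (simp add: pg.simps)
lemma pg0: assumes "n = 4*m" shows "pg n = pg m"
proof (cases "m = 0")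
  case True then show ?thesis using assms by simp
next
  case False
  then have "n \<noteq> 0 \<and> n mod 4 = 0 \<and> n div 4 = m" using assms by presburger
  then show ?thesis by (subst pg.simps) simp
qed
lemma pg1: assumes "n = 4*m+1" shows "pg n = pg m + 1"
proof -
  have "n \<noteq> 0 \<and> n mod 4 = 1 \<and> n div 4 = m" using assms by presburger
  then show ?thesis by (subst pg.simps) simp
qed
lemma pg2: assumes "n = 4*m+2" shows "pg n = min (pg m) (pg (m+1)) + 2"
proof -
  have "n \<noteq> 0 \<and> n mod 4 = 2 \<and> n div 4 = m" using assms by presburger
  then show ?thesis by (subst pg.simps) simp
qed
lemma pg3: assumes "n = 4*m+3" shows "pg n = pg (m+1) + 1"
proof -
  have "n \<noteq> 0 \<and> n mod 4 = 3 \<and> n div 4 = m" using assms by presburger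
  then show ?thesis by (subst pg.simps) simp
qed

lemma pg_lip: "pg (n+1) \<le> pg n + 1 \<and> pg n \<le> pg (n+1) + 1"
proof (induction n rule: less_induct)
  case (less n)
  define m where "m = n div 4"
  have "n mod 4 < 4" by simp
  then consider "n = 4*m" | "n = 4*m+1" | "n = 4*m+2" | "n = 4*m+3"
    unfolding m_def by linarith
  then show ?case
  proof cases
    case 1
    then show ?thesis using pg0[OF 1] pg1[of "n+1" m] by simp
  next
    case 2
    have "m < n" using 2 by simp
    then have "pg (m+1) \<le> pg m + 1 \<and> pg m \<le> pg (m+1) + 1" using less by blast
    then show ?thesis using pg1[OF 2] pg2[of "n+1" m] 2 by auto
  next
    case 3
    have "m < n" using 3 by simp
    then have "pg (m+1) \<le> pg m + 1 \<and> pg m \<le> pg (m+1) + 1" using less by blast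
    then show ?thesis using pg2[OF 3] pg3[of "n+1" m] 3 by auto
  next
    case 4
    then show ?thesis using pg3[OF 4] pg0[of "n+1" "m+1"] by simp
  qed
qed

lemma pg_lip1: "pg (n+1) \<le> pg n + 1" using pg_lip by blast
lemma pg_lip2: "pg n \<le> pg (n+1) + 1" using pg_lip by blast

lemma odd3: assumes "tw a = tw (a+2)" shows "pg (a+3) \<le> pg a + 1"
proof -
  define m where "m = a div 4"
  have "a mod 4 < 4" by simp
  then consider "a = 4*m" | "a = 4*m+1" | "a = 4*m+2" | "a = 4*m+3"
    unfolding m_def by linarith
  then show ?thesis
  proof cases
    case 1
    then show ?thesis using assms tw0[OF 1] tw2[of "a+2" m] by simp
  next
    case 2
    then show ?thesis using assms tw1[OF 2] tw3[of "a+2" m] by simp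
  next
    case 3
    then show ?thesis using pg2[OF 3] pg1[of "a+3" "m+1"] pg_lip1[of m] by simp
  next
    case 4
    then show ?thesis using pg3[OF 4] pg2[of "a+3" "m+1"] by simp
  qed
qed

lemma no5: "\<not> (tw p = tw (p+4) \<and> tw (p+1) = tw (p+3))"
proof -
  define m where "m = p div 4"
  have "p mod 4 < 4" by simp
  then consider "p = 4*m" | "p = 4*m+1" | "p = 4*m+2" | "p = 4*m+3"
    unfolding m_def by linarith
  then show ?thesis
  proof cases
    case 1
    then show ?thesis using tw0[OF 1] tw1[of "p+1" m] tw3[of "p+3" m] tw0[of "p+4" "m+1"] by auto
  next
    case 2
    then show ?thesis using tw1[OF 2] tw2[of "p+1" m] tw0[of "p+3" "m+1"] tw1[of "p+4" "m+1"] by auto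
  next
    case 3
    then show ?thesis using tw2[OF 3] tw3[of "p+1" m] tw1[of "p+3" "m+1"] tw2[of "p+4" "m+1"] by auto
  next
    case 4
    then show ?thesis using tw3[OF 4] tw0[of "p+1" "m+1"] tw2[of "p+3" "m+1"] tw3[of "p+4" "m+1"] by auto
  qed
qed

lemma even_key:
  "r \<le> c \<Longrightarrow> 0 < r \<Longrightarrow> (\<forall>i<r. tw (c-1-i) = tw (c+i)) \<Longrightarrow> pg (c+r) \<le> pg (c-r) + 1"
proof (induction c arbitrary: r rule: less_induct)
  case (less c)
  have H: "\<And>i. i < r \<Longrightarrow> tw (c-1-i) = tw (c+i)" using less.prems(3) by blast
  define j where "j = c div 4"
  have "c mod 4 < 4" by simp
  then consider "c = 4*j" | "c = 4*j+1" | "c = 4*j+2" | "c = 4*j+3"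
    unfolding j_def by linarith
  then show ?case
  proof cases
    case 2
    have "tw (c-1-0) = tw (c+0)" using H less.prems(2) by blast
    moreover have "tw (c-1-0) = tw j" by (rule tw0) (use 2 in arith)
    moreover have "tw (c+0) = fl (tw j)" by (rule tw1) (use 2 in arith)
    ultimately show ?thesis by simp
  next
    case 4
    have "tw (c-1-0) = tw (c+0)" using H less.prems(2) by blast
    moreover have "tw (c-1-0) = fl (tw j)" by (rule tw2) (use 4 in arith)
    moreover have "tw (c+0) = tw j" by (rule tw3) (use 4 in arith)
    ultimately show ?thesis by simp
  next
    case 3
    note c2 = 3
    have pal3: "tw (j-1) = tw (j-1+2)" if "r \<ge> 4" 
    proof -
      have j1: "j \<ge> 1" using c2 less.prems(1) that by arith
      have "tw (c-1-3) = tw (c+3)" by (rule H) (use that in simp)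
      moreover have "tw (c-1-3) = fl (tw (j-1))" by (rule tw2) (use c2 j1 in arith)
      moreover have "tw (c+3) = fl (tw (j+1))" by (rule tw1) (use c2 in arith)
      moreover have "j-1+2 = j+1" using j1 by arith
      ultimately show ?thesis by simp
    qed
    have od: "pg (j+2) \<le> pg (j-1) + 1" if "r \<ge> 4"
    proof -
      have j1: "j \<ge> 1" using c2 less.prems(1) that by arith
      have "j-1+3 = j+2" using j1 by arith
      then show ?thesis using odd3[OF pal3[OF that]] by simp
    qed
    consider "r \<ge> 7" | "r = 1" | "r = 2" | "r = 3" | "r = 4" | "r = 5" | "r = 6"
      using less.prems(2) by linarith
    then show ?thesis
    proof cases
      case 1
      have j2: "j \<ge> 2" using c2 less.prems(1) 1 by arith
      have "tw (c-1-4) = tw (c+4)" "tw (c-1-6) = tw (c+6)" by (rule H, use 1 in simp)+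
      moreover have "tw (c-1-4) = fl (tw (j-1))" by (rule tw1) (use c2 j2 in arith)
      moreover have "tw (c+4) = fl (tw (j+1))" by (rule tw2) (use c2 in arith)
      moreover have "tw (c-1-6) = tw (j-2)" by (rule tw3) (use c2 j2 in arith)
      moreover have "tw (c+6) = tw (j+2)" by (rule tw0) (use c2 in arith)
      moreover have "j-2+4 = j+2" "j-2+1 = j-1" "j-2+3 = j+1" using j2 by arith+
      ultimately show ?thesis using no5[of "j-2"] by simp
    next
      case 2
      have "pg (c+r) = pg (j+1) + 1" by (rule pg3) (use c2 2 in arith)
      moreover have "pg (c-r) = pg j + 1" by (rule pg1) (use c2 2 in arith)
      ultimately show ?thesis using pg_lip1[of j] by simp
    next
      case 3
      have "pg (c+r) = pg (j+1)" by (rule pg0) (use c2 3 in arith)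
      moreover have "pg (c-r) = pg j" by (rule pg0) (use c2 3 in arith)
      ultimately show ?thesis using pg_lip1[of j] by simp
    next
      case 4
      have j1: "j \<ge> 1" using c2 less.prems(1) 4 by arith
      have "pg (c+r) = pg (j+1) + 1" by (rule pg1) (use c2 4 in arith)
      moreover have "pg (c-r) = pg (j-1+1) + 1" by (rule pg3) (use c2 4 j1 in arith)
      moreover have "j-1+1 = j" using j1 by arith
      ultimately show ?thesis using pg_lip1[of j] by simp
    next
      case 5
      have j1: "j \<ge> 1" using c2 less.prems(1) 5 by arith
      have "pg (c+r) = min (pg (j+1)) (pg (j+1+1)) + 2" by (rule pg2) (use c2 5 in arith)
      moreover have "pg (c-r) = min (pg (j-1)) (pg (j-1+1)) + 2" by (rule pg2) (use c2 5 j1 in arith)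
      moreover have "j-1+1 = j" using j1 by arith
      moreover have "pg (j+2) \<le> pg (j-1) + 1" using od 5 by simp
      ultimately show ?thesis using pg_lip1[of j] by (simp add: min_def)
    next
      case 6
      have j1: "j \<ge> 1" using c2 less.prems(1) 6 by arith
      have "pg (c+r) = pg (j+1+1) + 1" by (rule pg3) (use c2 6 in arith)
      moreover have "pg (c-r) = pg (j-1) + 1" by (rule pg1) (use c2 6 j1 in arith)
      ultimately show ?thesis using od 6 by simp
    next
      case 7
      have j1: "j \<ge> 1" using c2 less.prems(1) 7 by arith
      have "pg (c+r) = pg (j+2)" by (rule pg0) (use c2 7 in arith)
      moreover have "pg (c-r) = pg (j-1)" by (rule pg0) (use c2 7 j1 in arith)
      ultimately show ?thesis using od 7 by simp
    qed
  next
    case 1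
    define q where "q = (r+3) div 4"
    have q1: "q \<ge> 1" "q \<le> j" using less.prems(1,2) 1 unfolding q_def by arith+
    have j1: "j \<ge> 1" using q1 by simp
    have jc: "j < c" using 1 j1 by simp
    have P: "\<forall>i<r'. tw (j-1-i) = tw (j+i)" if "r' \<le> q" for r'
    proof (intro allI impI)
      fix i assume i: "i < r'"
      have "4*i < r" using i that unfolding q_def by arith
      then have "tw (c-1-4*i) = tw (c+4*i)" using H by blast
      moreover have "tw (c-1-4*i) = tw (j-1-i)" by (rule tw3) (use 1 i that q1 in arith)
      moreover have "tw (c+4*i) = tw (j+i)" by (rule tw0) (use 1 in arith)
      ultimately show "tw (j-1-i) = tw (j+i)" by simp
    qed
    have IHq: "pg (j+r') \<le> pg (j-r') + 1" if "r' \<le> q" for r'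
    proof (cases "r' = 0")
      case True then show ?thesis by simp
    next
      case False
      then show ?thesis using less.IH[OF jc, of r'] P[OF that] that q1 by simp
    qed
    define q0 where "q0 = r div 4"
    have "r mod 4 < 4" by simp
    then consider "r = 4*q0" | "r = 4*q0+1" | "r = 4*q0+2" | "r = 4*q0+3"
      unfolding q0_def by linarith
    then show ?thesis
    proof cases
      case 1
      have qq: "q0 \<le> q" using 1 unfolding q_def by arith
      have "pg (c+r) = pg (j+q0)" by (rule pg0) (use 1 \<open>c = 4*j\<close> in arith)
      moreover have "pg (c-r) = pg (j-q0)" by (rule pg0) (use 1 \<open>c = 4*j\<close> in arith)
      ultimately show ?thesis using IHq[OF qq] by simp
    next
      case 2
      have qq: "q0+1 = q" using 2 unfolding q_def by arith
      have "pg (c+r) = pg (j+q0) + 1" by (rule pg1) (use 2 \<open>c = 4*j\<close> in arith)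
      moreover have "pg (c-r) = pg (j-q0-1+1) + 1" by (rule pg3) (use 2 \<open>c = 4*j\<close> qq q1 in arith)
      moreover have "j-q0-1+1 = j-q0" using qq q1 by arith
      ultimately show ?thesis using IHq[of q0] qq by simp
    next
      case 3
      have qq: "q0+1 = q" using 3 unfolding q_def by arith
      have "pg (c+r) = min (pg (j+q0)) (pg (j+q0+1)) + 2" by (rule pg2) (use 3 \<open>c = 4*j\<close> in arith)
      moreover have "pg (c-r) = min (pg (j-q0-1)) (pg (j-q0-1+1)) + 2" by (rule pg2) (use 3 \<open>c = 4*j\<close> qq q1 in arith)
      moreover have "j-q0-1+1 = j-q0" "j-q0-1 = j-(q0+1)" "j+q0+1 = j+(q0+1)" using qq q1 by arith+
      ultimately show ?thesis using IHq[of q0] IHq[of "q0+1"] qq by (simp add: min_def)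
    next
      case 4
      have qq: "q0+1 = q" using 4 unfolding q_def by arith
      have "pg (c+r) = pg (j+q0+1) + 1" by (rule pg3) (use 4 \<open>c = 4*j\<close> in arith)
      moreover have "pg (c-r) = pg (j-q0-1) + 1" by (rule pg1) (use 4 \<open>c = 4*j\<close> qq q1 in arith)
      moreover have "j-q0-1 = j-(q0+1)" "j+q0+1 = j+(q0+1)" using qq q1 by arith+
      ultimately show ?thesis using IHq[of "q0+1"] qq by simp
    qed
  qed
qed

lemma pal_key:
  assumes ab: "a < b" and P: "\<forall>i<b-a. tw (a+i) = tw (b-1-i)"
  shows "pg b \<le> pg a + 1"
proof -
  obtain k where k: "b - a = 2*k \<or> b - a = 2*k+1" by (metis dvd_mult_div_cancel odd_two_times_div_two_succ)
  then consider "b - a = 2*k" | "b - a = 2*k+1" by blast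
  then show ?thesis
  proof cases
    case 1
    have k1: "0 < k" using 1 ab by simp
    have Q: "\<forall>i<k. tw (a+k-1-i) = tw (a+k+i)"
    proof (intro allI impI)
      fix i assume i: "i < k"
      have "k-1-i < b-a" using i 1 by arith
      then have "tw (a+(k-1-i)) = tw (b-1-(k-1-i))" using P by blast
      moreover have "a+(k-1-i) = a+k-1-i" "b-1-(k-1-i) = a+k+i" using i 1 ab by arith+
      ultimately show "tw (a+k-1-i) = tw (a+k+i)" by simp
    qed
    have "pg (a+k+k) \<le> pg (a+k-k) + 1" by (rule even_key) (use k1 Q in auto)
    moreover have "a+k+k = b" using 1 ab by arith
    ultimately show ?thesis by simp
  next
    case 2
    note o2 = 2
    consider "k = 0" | "k = 1" | "k \<ge> 2" by linarith
    then show ?thesis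
    proof cases
      case 1 then have "b = a+1" using o2 ab by arith
      then show ?thesis using pg_lip1 by simp
    next
      case 2
      have b: "b = a+3" using o2 2 ab by arith
      have "0 < b-a" using b by arith
      then have "tw (a+0) = tw (b-1-0)" using P by blast
      then have "tw a = tw (a+2)" using b by simp
      then show ?thesis using odd3 b by simp
    next
      case 3
      define p where "p = a+k-2"
      have "k-2 < b-a" "k-1 < b-a" using o2 3 by arith+
      then have f1: "tw (a+(k-2)) = tw (b-1-(k-2))" and f2: "tw (a+(k-1)) = tw (b-1-(k-1))" using P by blast+
      have e1: "a+(k-2) = p" and e2: "b-1-(k-2) = p+4" and e3: "a+(k-1) = p+1" and e4: "b-1-(k-1) = p+3"
        using o2 3 ab unfolding p_def by arith+
      have "tw p = tw (p+4)" using f1 unfolding e1 e2 .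
      moreover have "tw (p+1) = tw (p+3)" using f2 unfolding e3 e4 .
      ultimately show ?thesis using no5[of p] by blast
    qed
  qed
qed

definition fac :: "nat \<Rightarrow> nat \<Rightarrow> bool" where
  "fac n k \<longleftrightarrow> (\<exists>ps. length ps = k \<and> (\<forall>p\<in>set ps. p \<noteq> [] \<and> palindrome p)
      \<and> concat ps = map tw [0..<n])"

lemma split_prefix:
  assumes "xs @ ys = map tw [0..<n]"
  shows "xs = map tw [0..<length xs] \<and> ys = map tw [length xs..<n] \<and> length xs + length ys = n"
proof -
  have l: "length xs + length ys = n" using arg_cong[OF assms, of length] by simp
  have "xs = take (length xs) (map tw [0..<n])" "ys = drop (length xs) (map tw [0..<n])"
    using assms by (metis append_eq_conv_conj)+
  then show ?thesis using l by (simp add: take_map drop_map take_upt drop_upt)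
qed

lemma lower:
  "(\<forall>p\<in>set ps. p \<noteq> [] \<and> palindrome p) \<Longrightarrow> concat ps = map tw [0..<n] \<Longrightarrow> pg n \<le> length ps"
proof (induction ps arbitrary: n rule: rev_induct)
  case Nil then show ?case by simp
next
  case (snoc p qs)
  define a where "a = length (concat qs)"
  have sp: "concat qs @ p = map tw [0..<n]" using snoc.prems by simp
  from split_prefix[OF sp] have A: "concat qs = map tw [0..<a]" and Pp: "p = map tw [a..<n]"
    and L: "a + length p = n" unfolding a_def by auto
  have pne: "p \<noteq> []" and pp: "palindrome p" using snoc.prems by auto
  have an: "a < n" using L pne by (cases p) auto
  have "\<forall>i<n-a. tw (a+i) = tw (n-1-i)"
  proof (intro allI impI)
    fix i assume i: "i < n - a"
    have "rev p ! i = p ! i" using pp unfolding palindrome_def by simp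
    moreover have "p ! i = tw (a+i)" using Pp i by simp
    moreover have "rev p ! i = p ! (length p - Suc i)" using i L by (simp add: rev_nth)
    moreover have "p ! (length p - Suc i) = tw (n-1-i)" using Pp i L by simp
    ultimately show "tw (a+i) = tw (n-1-i)" by simp
  qed
  then have "pg n \<le> pg a + 1" using pal_key an by blast
  moreover have "pg a \<le> length qs" using snoc.IH[OF _ A] snoc.prems(1) by simp
  ultimately show ?case by simp
qed

definition Phi :: "letter list \<Rightarrow> letter list" where
  "Phi w = concat (map tm_morph w)"

lemma Phi_append[simp]: "Phi (xs @ ys) = Phi xs @ Phi ys" by (simp add: Phi_def)
lemma Phi_Nil[simp]: "Phi [] = []" by (simp add: Phi_def)
lemma Phi_Cons: "Phi (x # xs) = tm_morph x @ Phi xs" by (simp add: Phi_def)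
lemma rev_morph[simp]: "rev (tm_morph x) = tm_morph x" by (cases x) auto
lemma Phi_rev: "rev (Phi w) = Phi (rev w)"
  by (induction w) (auto simp: Phi_Cons)
lemma Phi_ne: "w \<noteq> [] \<Longrightarrow> Phi w \<noteq> []"
  by (cases w) (auto simp: Phi_Cons, cases "hd w", auto)
lemma Phi_pal: "palindrome w \<Longrightarrow> palindrome (Phi w)"
  unfolding palindrome_def by (simp add: Phi_rev)
lemma Phi_concat: "Phi (concat ps) = concat (map Phi ps)"
  by (induction ps) auto

lemma Phi_prefix: "Phi (map tw [0..<n]) = map tw [0..<4*n]"
proof (induction n)
  case 0 then show ?case by simp
next
  case (Suc n)
  have s4: "4*Suc n = Suc (Suc (Suc (Suc (4*n))))" by simp
  have e: "[0..<4*Suc n] = [0..<4*n] @ [4*n, 4*n+1, 4*n+2, 4*n+3]"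
    unfolding s4 by simp
  have m: "tm_morph (tw n) = [tw (4*n), tw (4*n+1), tw (4*n+2), tw (4*n+3)]"
    using tw0[of "4*n" n] tw1[of "4*n+1" n] tw2[of "4*n+2" n] tw3[of "4*n+3" n]
    by (cases "tw n") auto
  show ?case using Suc e m by (simp add: Phi_Cons)
qed

lemma U1: "fac n k \<Longrightarrow> fac (4*n) k"
proof -
  assume "fac n k"
  then obtain ps where ps: "length ps = k" "\<forall>p\<in>set ps. p \<noteq> [] \<and> palindrome p"
    "concat ps = map tw [0..<n]" unfolding fac_def by blast
  have "length (map Phi ps) = k" "\<forall>p\<in>set (map Phi ps). p \<noteq> [] \<and> palindrome p"
    "concat (map Phi ps) = map tw [0..<4*n]"
    using ps Phi_ne Phi_pal by (auto simp flip: Phi_concat simp: Phi_prefix)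
  then show "fac (4*n) k" unfolding fac_def by blast
qed

lemma U2: "fac n k \<Longrightarrow> fac (n+1) (k+1)"
proof -
  assume "fac n k"
  then obtain ps where ps: "length ps = k" "\<forall>p\<in>set ps. p \<noteq> [] \<and> palindrome p"
    "concat ps = map tw [0..<n]" unfolding fac_def by blast
  have "length (ps @ [[tw n]]) = k+1" "\<forall>p\<in>set (ps @ [[tw n]]). p \<noteq> [] \<and> palindrome p"
    "concat (ps @ [[tw n]]) = map tw [0..<n+1]"
    using ps by (auto simp: palindrome_def)
  then show "fac (n+1) (k+1)" unfolding fac_def by blast
qed


lemma U3: "fac (n+1) k \<Longrightarrow> \<exists>k'\<le>k+1. fac n k'"
proof -
  assume "fac (n+1) k"
  then obtain ps where ps: "length ps = k" "\<forall>p\<in>set ps. p \<noteq> [] \<and> palindrome p"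
    "concat ps = map tw [0..<n+1]" unfolding fac_def by blast
  have "ps \<noteq> []"
  proof
    assume "ps = []"
    then have "concat ps = []" by simp
    with ps(3) show False by simp
  qed
  then obtain qs p where qp: "ps = qs @ [p]" by (metis rev_exhaust)
  have pne: "p \<noteq> []" and pp: "palindrome p" using ps(2) qp by auto
  from pne obtain p' x where p': "p = p' @ [x]" by (metis rev_exhaust)
  have "concat ps = (concat qs @ p') @ [x]" using qp p' by simp
  moreover have "map tw [0..<n+1] = map tw [0..<n] @ [tw n]" by simp
  ultimately have "(concat qs @ p') @ [x] = map tw [0..<n] @ [tw n]" using ps(3) by (simp only:)
  then have c: "concat qs @ p' = map tw [0..<n]" by (rule append1_eq_conv[THEN iffD1, THEN conjunct1])
  have qsok: "\<forall>p\<in>set qs. p \<noteq> [] \<and> palindrome p" using ps(2) qp by auto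
  show ?thesis
  proof (cases p')
    case Nil
    then have "concat qs = map tw [0..<n]" using c by simp
    then have "fac n (length qs)" using qsok unfolding fac_def by blast
    moreover have "length qs \<le> k+1" using ps(1) qp by simp
    ultimately show ?thesis by blast
  next
    case (Cons y w)
    have "rev p = p" using pp unfolding palindrome_def by simp
    then have "rev (p' @ [x]) = p' @ [x]" unfolding p' .
    then have "rev ((y # w) @ [x]) = (y # w) @ [x]" unfolding Cons .
    then have e: "x # rev w @ [y] = y # w @ [x]"
      by (simp only: rev.simps rev_append append.simps append_Nil)
    then have rw: "rev w = w" by (metis append1_eq_conv list.inject)
    define rs where "rs = qs @ [[y]] @ (if w = [] then [] else [w])"
    have "length rs \<le> length qs + 2" unfolding rs_def by simp
    then have "length rs \<le> k+1" using ps(1) qp by simp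
    moreover have "\<forall>p\<in>set rs. p \<noteq> [] \<and> palindrome p"
    proof
      fix q assume "q \<in> set rs"
      then have "q \<in> set qs \<or> q = [y] \<or> (q = w \<and> w \<noteq> [])" unfolding rs_def
        by (auto split: if_splits)
      then show "q \<noteq> [] \<and> palindrome q" using qsok rw unfolding palindrome_def by auto
    qed
    moreover have "concat rs = concat qs @ y # w" unfolding rs_def by simp
    then have "concat rs = map tw [0..<n]" using c Cons by simp
    ultimately show ?thesis unfolding fac_def by blast
  qed
qed

lemma U3': "fac (n+2) k \<Longrightarrow> \<exists>k'\<le>k+2. fac n k'"
proof -
  assume "fac (n+2) k"
  then obtain k1 where k1: "k1 \<le> k+1" "fac (n+1) k1" using U3[of "n+1" k] by auto
  then obtain k2 where "k2 \<le> k1+1" "fac n k2" using U3[of n k1] by auto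
  then show ?thesis using k1 by (intro exI[of _ k2]) auto
qed

lemma upper: "\<exists>k\<le>pg n. fac n k"
proof (induction n rule: less_induct)
  case (less n)
  define m where "m = n div 4"
  have f0: "fac 0 0" unfolding fac_def by auto
  obtain k0 where k0: "k0 \<le> pg m" "fac (4*m) k0"
  proof (cases "m = 0")
    case True then show ?thesis using f0 that[of 0] by simp
  next
    case False
    then have "m < n" unfolding m_def by simp
    then obtain k where "k \<le> pg m" "fac m k" using less by blast
    then show ?thesis using U1 that by blast
  qed
  have k1: "fac (4*m+1) (k0+1)" using U2[OF k0(2)] .
  have B4: "\<exists>k\<le>pg (m+1). fac (4*(m+1)) k" if mn1: "m+1 < n"
  proof -
    obtain k where k: "k \<le> pg (m+1)" "fac (m+1) k" using less.IH[OF mn1] by blast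
    have "fac (4*(m+1)) k" using U1[OF k(2)] .
    then show ?thesis using k(1) by blast
  qed
  have "n mod 4 < 4" by simp
  then consider "n = 4*m" | "n = 4*m+1" | "n = 4*m+2" | "n = 4*m+3"
    unfolding m_def by linarith
  then show ?case
  proof cases
    case 1 then show ?thesis using k0 pg0[OF 1] by auto
  next
    case 2 then show ?thesis using k1 pg1[OF 2] k0(1) by (intro exI[of _ "k0+1"]) simp
  next
    case 3
    have mn: "m+1 < n" using 3 by simp
    have e: "4*(m+1) = n+2" using 3 by simp
    obtain kb where kb: "kb \<le> pg (m+1)" "fac (n+2) kb" using B4[OF mn] unfolding e by blast
    obtain kc where kc: "kc \<le> kb+2" "fac n kc" using U3'[OF kb(2)] by blast
    have ka: "fac n (k0+2)" using U2[OF k1] 3 by simp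
    show ?thesis
    proof (cases "pg m \<le> pg (m+1)")
      case True
      then show ?thesis using ka k0(1) pg2[OF 3] by (intro exI[of _ "k0+2"]) simp
    next
      case False
      then show ?thesis using kc kb(1) pg2[OF 3] by (intro exI[of _ kc]) simp
    qed
  next
    case 4
    have mn: "m+1 < n" using 4 by simp
    have e: "4*(m+1) = n+1" using 4 by simp
    obtain kb where kb: "kb \<le> pg (m+1)" "fac (n+1) kb" using B4[OF mn] unfolding e by blast
    obtain kc where kc: "kc \<le> kb+1" "fac n kc" using U3[OF kb(2)] by blast
    then show ?thesis using kb(1) pg3[OF 4] by (intro exI[of _ kc]) simp
  qed
qed

lemma PPL_pg: "PPL_t n = pg n"
proof -
  have eq: "PPL_t n = (LEAST k. fac n k)"
    unfolding PPL_t_def fac_def tm_prefix_tw by (rule refl)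
  obtain k where k: "k \<le> pg n" "fac n k" using upper by blast
  have l1: "(LEAST k. fac n k) \<le> k" using k(2) by (rule Least_le)
  have "fac n (LEAST k. fac n k)" using k(2) by (rule LeastI)
  then obtain ps where ps: "length ps = (LEAST k. fac n k)" "\<forall>p\<in>set ps. p \<noteq> [] \<and> palindrome p"
      "concat ps = map tw [0..<n]" unfolding fac_def by blast
  have "pg n \<le> length ps" using ps(2,3) by (rule lower)
  then show ?thesis using eq k(1) l1 ps(1) by linarith
qed

lemma t1: "(\<lambda>n::nat. 3 / (4 * ln 2) + (5/2) / ln (real n)) \<longlonglongrightarrow> 3 / (4 * ln 2)"
  by real_asymp

lemma t2: "(\<lambda>k::nat. (2 + 3 * real k) / (ln 3 + real k * ln 16)) \<longlonglongrightarrow> 3 / ln 16"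
  apply real_asymp
  apply (simp add: divide_inverse)
  done

lemma t3: "(\<lambda>k::nat. 1 / (real (k+1) * ln 4)) \<longlonglongrightarrow> 0"
  by real_asymp

lemma ln4: "ln (4::real) = 2 * ln 2"
proof -
  have "ln ((2::real)^2) = 2 * ln 2" by (subst ln_realpow) auto
  then show ?thesis by simp
qed

lemma ln16: "ln (16::real) = 4 * ln 2"
proof -
  have "ln ((2::real)^4) = 4 * ln 2" by (subst ln_realpow) auto
  then show ?thesis by simp
qed

lemma pg_1: "pg 1 = 1" using pg1[of 1 0] by simp
lemma pg_2: "pg 2 = 2" using pg2[of 2 0] pg_1 by simp
lemma pg_3: "pg 3 = 2" using pg3[of 3 0] pg_1 by simp
lemma pg_4: "pg 4 = 1" using pg0[of 4 1] pg_1 by simp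

lemma S_step: "r < 4 \<Longrightarrow> pg (4*m+r) + pg (4*m+r+1) \<le> pg m + pg (m+1) + 3"
proof -
  assume r: "r < 4"
  have L1: "pg (m+1) \<le> pg m + 1" "pg m \<le> pg (m+1) + 1" using pg_lip by auto
  consider "r = 0" | "r = 1" | "r = 2" | "r = 3" using r by linarith
  then show ?thesis
  proof cases
    case 1
    have "pg (4*m+r) = pg m" by (rule pg0) (use 1 in simp)
    moreover have "pg (4*m+r+1) = pg m + 1" by (rule pg1) (use 1 in simp)
    ultimately show ?thesis using L1 by simp
  next
    case 2
    have "pg (4*m+r) = pg m + 1" by (rule pg1) (use 2 in simp)
    moreover have "pg (4*m+r+1) = min (pg m) (pg (m+1)) + 2" by (rule pg2) (use 2 in simp)
    ultimately show ?thesis using L1 by (simp add: min_def)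
  next
    case 3
    have "pg (4*m+r) = min (pg m) (pg (m+1)) + 2" by (rule pg2) (use 3 in simp)
    moreover have "pg (4*m+r+1) = pg (m+1) + 1" by (rule pg3) (use 3 in simp)
    ultimately show ?thesis using L1 by (simp add: min_def)
  next
    case 4
    have "pg (4*m+r) = pg (m+1) + 1" by (rule pg3) (use 4 in simp)
    moreover have "pg (4*m+r+1) = pg (m+1)" by (rule pg0) (use 4 in simp)
    ultimately show ?thesis using L1 by simp
  qed
qed

lemma S_bound: "n \<ge> 1 \<Longrightarrow> real (pg n + pg (n+1)) \<le> 3 * ln (real n) / ln 4 + 4"
proof (induction n rule: less_induct)
  case (less n)
  define m where "m = n div 4"
  define r where "r = n mod 4"
  have n: "n = 4*m+r" "r < 4" unfolding m_def r_def by auto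
  have l4: "ln (4::real) > 0" by simp
  show ?case
  proof (cases "m = 0")
    case True
    then have "n = 1 \<or> n = 2 \<or> n = 3" using n less.prems by auto
    moreover have "pg (Suc 0) = 1" "pg (Suc (Suc 0)) = 2" "pg (Suc (Suc (Suc 0))) = 2"
      "pg (Suc (Suc (Suc (Suc 0)))) = 1"
      using pg_1 pg_2 pg_3 pg_4 by (simp_all add: numeral_eq_Suc)
    ultimately have "pg n + pg (n+1) \<le> 4" using pg_1 pg_2 pg_3 pg_4 by auto
    moreover have "ln (real n) \<ge> 0" using less.prems by simp
    ultimately have "real (pg n + pg (n+1)) \<le> 4" "3 * ln (real n) / ln 4 \<ge> 0"
      using l4 by (simp_all add: divide_nonneg_pos)
    then show ?thesis by linarith
  next
    case False
    then have mn: "m < n" "m \<ge> 1" using n by auto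
    have IH: "real (pg m + pg (m+1)) \<le> 3 * ln (real m) / ln 4 + 4" using less.IH mn by blast
    have st: "pg n + pg (n+1) \<le> pg m + pg (m+1) + 3" using S_step[OF n(2), of m] n(1) by simp
    have "real n \<ge> 4 * real m" using n by simp
    then have "ln (real n) \<ge> ln (4 * real m)" using mn by simp
    also have "ln (4 * real m) = ln 4 + ln (real m)" using mn by (simp add: ln_mult)
    finally have h: "ln 4 + ln (real m) \<le> ln (real n)" .
    have "3 * (ln 4 + ln (real m)) / ln 4 \<le> 3 * ln (real n) / ln 4"
      by (rule divide_right_mono) (use h l4 in auto)
    moreover have "3 * (ln 4 + ln (real m)) / ln 4 = 3 + 3 * ln (real m) / ln 4"
      using l4 by (simp add: field_simps)
    ultimately have "3 * ln (real n) / ln 4 \<ge> 3 + 3 * ln (real m) / ln 4" by simp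
    then show ?thesis using IH st by linarith
  qed
qed

lemma pg_bound: "n \<ge> 1 \<Longrightarrow> real (pg n) \<le> 3 / (4 * ln 2) * ln (real n) + 5/2"
proof -
  assume n: "n \<ge> 1"
  have "pg n \<le> pg (n+1) + 1" using pg_lip by auto
  then have "2 * real (pg n) \<le> real (pg n + pg (n+1)) + 1" by simp
  also have "\<dots> \<le> 3 * ln (real n) / ln 4 + 5" using S_bound[OF n] by simp
  finally show ?thesis unfolding ln4 by (simp add: field_simps)
qed

primrec sq :: "nat \<Rightarrow> nat" where
  "sq 0 = 2" | "sq (Suc k) = 16 * sq k + 9"

lemma sq_pg: "pg (sq k) = 2 + 3*k \<and> pg (sq k + 1) = 2 + 3*k"
proof (induction k)
  case 0 then show ?case using pg_2 pg_3 by simp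
next
  case (Suc k)
  define a where "a = sq k"
  have ha: "pg a = 2+3*k" "pg (a+1) = 2+3*k" using Suc unfolding a_def by auto
  have p2: "pg (4*a+2) = min (pg a) (pg (a+1)) + 2" by (rule pg2) simp
  have p3: "pg (4*a+2+1) = pg (a+1) + 1" by (rule pg3) simp
  have q1: "pg (16*a+9) = pg (4*a+2) + 1" by (rule pg1) simp
  have q2: "pg (16*a+9+1) = min (pg (4*a+2)) (pg (4*a+2+1)) + 2" by (rule pg2) simp
  have "pg (16*a+9) = 5 + 3*k" using q1 p2 ha by simp
  moreover have "pg (16*a+9+1) = 5 + 3*k" using q2 p2 p3 ha by simp
  ultimately show ?case unfolding a_def by simp
qed

lemma sq_bound: "sq k + 1 \<le> 3 * 16^k"
  by (induction k) auto

lemma sq_ge: "sq k \<ge> 2" by (induction k) auto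

lemma sq_mono: "strict_mono sq"
  by (simp add: strict_mono_Suc_iff)

lemma pg_pow4: "pg (4^(k+1)) = 1"
proof (induction k)
  case 0 then show ?case using pg_4 by simp
next
  case (Suc k) then show ?case using pg0[of "4^(Suc k + 1)" "4^(k+1)"] by simp
qed

theorem corollary16:
  shows "limsup (\<lambda>n. ereal (real (PPL_t n) / ln (real n))) = ereal (3 / (4 * ln 2))
    \<and> liminf (\<lambda>n. ereal (real (PPL_t n) / ln (real n))) = 0"
proof -
  define L :: real where "L = 3 / (4 * ln 2)"
  define Y where "Y = (\<lambda>n. ereal (real (pg n) / ln (real n)))"
  have XY: "(\<lambda>n. ereal (real (PPL_t n) / ln (real n))) = Y"
    unfolding Y_def by (simp add: PPL_pg)
  have l2: "ln (2::real) > 0" by simp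
  have ev1: "eventually (\<lambda>n. Y n \<le> ereal (L + (5/2) / ln (real n))) sequentially"
    unfolding eventually_sequentially
  proof (intro exI allI impI)
    fix n :: nat assume n: "n \<ge> 2"
    have lnpos: "ln (real n) > 0" using n by simp
    have "real (pg n) \<le> L * ln (real n) + 5/2" using pg_bound[of n] n unfolding L_def by simp
    then have "real (pg n) / ln (real n) \<le> (L * ln (real n) + 5/2) / ln (real n)"
      using lnpos by (simp add: divide_right_mono)
    also have "\<dots> = L + (5/2) / ln (real n)" using lnpos by (simp add: field_simps)
    finally show "Y n \<le> ereal (L + (5/2) / ln (real n))" unfolding Y_def by simp
  qed
  have "limsup Y \<le> limsup (\<lambda>n. ereal (L + (5/2) / ln (real n)))"
    by (rule Limsup_mono[OF ev1])
  also have "\<dots> = ereal L"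
    by (rule lim_imp_Limsup) (use t1 tendsto_ereal L_def in auto)
  finally have up: "limsup Y \<le> ereal L" .
  have ev2: "\<And>k. ereal ((2 + 3 * real k) / (ln 3 + real k * ln 16)) \<le> (Y \<circ> sq) k"
  proof -
    fix k
    have s2: "real (sq k) \<ge> 2" using sq_ge[of k] by simp
    have "sq k \<le> 3 * 16^k" using sq_bound[of k] by simp
    then have "real (sq k) \<le> real (3 * 16^k)" by (rule of_nat_mono)
    then have sb: "real (sq k) \<le> 3 * 16^k" by simp
    have lnpos: "ln (real (sq k)) > 0" using s2 by simp
    have "ln (real (sq k)) \<le> ln (3 * 16^k)" using sb s2 by simp
    also have "\<dots> = ln 3 + real k * ln 16" by (simp add: ln_mult ln_realpow)
    finally have le: "ln (real (sq k)) \<le> ln 3 + real k * ln 16" .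
    have "(2 + 3 * real k) / (ln 3 + real k * ln 16) \<le> (2 + 3 * real k) / ln (real (sq k))"
      by (rule divide_left_mono) (use le lnpos in auto)
    also have "\<dots> = real (pg (sq k)) / ln (real (sq k))" using sq_pg[of k] by simp
    finally show "ereal ((2 + 3 * real k) / (ln 3 + real k * ln 16)) \<le> (Y \<circ> sq) k"
      unfolding Y_def by simp
  qed
  have "ereal L = limsup (\<lambda>k. ereal ((2 + 3 * real k) / (ln 3 + real k * ln 16)))"
  proof -
    have "3 / ln (16::real) = L" unfolding L_def ln16 by simp
    then show ?thesis
      by (intro lim_imp_Limsup[symmetric]) (use t2 tendsto_ereal in auto)
  qed
  also have "\<dots> \<le> limsup (Y \<circ> sq)"
    by (rule Limsup_mono) (use ev2 in auto)
  also have "\<dots> \<le> limsup Y" by (rule limsup_subseq_mono[OF sq_mono])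
  finally have lo: "ereal L \<le> limsup Y" .
  have "0 \<le> liminf Y"
  proof (rule Liminf_bounded, rule always_eventually, intro allI)
    fix n
    have "0 \<le> real (pg n) / ln (real n)"
      by (cases "n = 0") (auto intro: divide_nonneg_nonneg)
    then show "0 \<le> Y n" unfolding Y_def by (simp add: zero_ereal_def)
  qed
  moreover have "liminf Y \<le> 0"
  proof -
    define r :: "nat \<Rightarrow> nat" where "r = (\<lambda>k. 4^(k+1))"
    have sm: "strict_mono r" unfolding r_def by (simp add: strict_mono_Suc_iff)
    have Yr: "(Y \<circ> r) k = ereal (1 / (real (k+1) * ln 4))" for k
    proof -
      have e: "real (r k) = (4::real)^(k+1)" unfolding r_def by simp
      have "ln ((4::real)^(k+1)) = real (k+1) * ln 4" by (rule ln_realpow)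
      then have "ln (real (r k)) = real (k+1) * ln 4" unfolding e .
      then show ?thesis unfolding Y_def r_def using pg_pow4[of k] by simp
    qed
    have "liminf Y \<le> liminf (Y \<circ> r)" by (rule liminf_subseq_mono[OF sm])
    also have "\<dots> = 0"
      unfolding Yr zero_ereal_def
      by (rule lim_imp_Liminf) (use t3 tendsto_ereal in auto)
    finally show ?thesis .
  qed
  ultimately have "liminf Y = 0" by simp
  then show ?thesis using up lo XY L_def by auto
qed

end
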